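(* Let $\mathcal{P}$ be a collection of cells, $K$ a field and $\prec$ a monomial order on $S_{\mathcal{P}}$. For an inner interval $[p,q]$ of $\mathcal{P}$ write $f_{p,q}=x_px_q-x_{p'}x_{q'}$ for its inner 2-minor, where $p',q'$ are its anti-diagonal corners. (i) Let $a=(a_1,a_2)$, $b=(b_1,b_2)$, $\beta=(\beta_1,\beta_2)$ with $a_1<b_1<\beta_1$, $a_2<b_2<\beta_2$, such that $[a,b]$ and $[b,\beta]$ are inner intervals of $\mathcal{P}$. Put $c=(a_1,b_2)$, $d=(b_1,a_2)$, $\gamma=(b_1,\beta_2)$, $\delta=(\beta_1,b_2)$. Assume that the $S$-polynomial $S(f_{a,b},f_{b,\beta})$ reduces to $0$ modulo the set of inner 2-minors of $\mathcal{P}$ with respect to $\prec$, and that $[c,\gamma]$ and $[d,\delta]$ are not inner intervals of $\mathcal{P}$. Then $\gcd(\mathrm{in}_\prec(f_{a,b}),\mathrm{in}_\prec(f_{b,\beta}))=1$. (ii) Let $[p,q]$ and $[p',q']$ be inner intervals of $\mathcal{P}$ meeting in the single point $b$, which is the upper left corner $(p_1,q_2)$ of $[p,q]$ and the lower right corner $(q'_1,p'_2)$ of $[p',q']$. Put $r=(p'_1,p_2)$ and $h=(q_1,q'_2)$. Assume $S(f_{p,q},f_{p',q'})$ reduces to $0$ modulo the inner 2-minors of $\mathcal{P}$ with respect to $\prec$ and that $[r,b]$ and $[b,h]$ are not inner intervals of $\mathcal{P}$. Then $\gcd(\mathrm{in}_\prec(f_{p,q}),\mathrm{in}_\prec(f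_{p',q'}))=1$.
   Context: For $a\le b$ in $\mathbb{Z}^2$ (componentwise), $[a,b]$ is the set of lattice points between them; it is proper if both coordinates of $a$ are strictly smaller than those of $b$; then $a,b$ are its diagonal corners and $(a_1,b_2),(b_1,a_2)$ its anti-diagonal corners (upper left and lower right). A cell is $[a,a+(1,1)]$. A collection of cells is a finite non-empty weakly connected set $\mathcal{P}$ of cells; $V(\mathcal{P})$ is the set of vertices of its cells. An inner interval of $\mathcal{P}$ is a proper interval all of whose cells belong to $\mathcal{P}$; its inner 2-minor is $x_ax_b-x_cx_d$ ($a,b$ diagonal, $c,d$ anti-diagonal corners). $S_{\mathcal{P}}=K[x_v:v\in V(\mathcal{P})]$. $\mathrm{in}_\prec(f)$ denotes the initial monomial. *)

theory Defs
  imports Main "HOL-Library.Poly_Mapping"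
begin

type_synonym point = "int \<times> int"

definition pt_le :: "point \<Rightarrow> point \<Rightarrow> bool" where
  "pt_le a b \<longleftrightarrow> fst a \<le> fst b \<and> snd a \<le> snd b"

definition interval :: "point \<Rightarrow> point \<Rightarrow> point set" where
  "interval a b = {v. pt_le a v \<and> pt_le v b}"

definition proper :: "point \<Rightarrow> point \<Rightarrow> bool" where
  "proper a b \<longleftrightarrow> fst a < fst b \<and> snd a < snd b"

text \<open>A cell is encoded by its lower left corner c; the cell itself is [c, c+(1,1)].\<close>
definition cell :: "point \<Rightarrow> point set" where
  "cell c = interval c (fst c + 1, snd c + 1)"

definition weakly_connected :: "point set \<Rightarrow> bool" where
  "weakly_connected P \<longleftrightarrow>
     (\<forall>C\<in>P. \<forall>D\<in>P. (\<lambda>x y. x \<in> P \<and> y \<in> P \<and> cell x \<inter> cell y \<noteq> {})\<^sup>*\<^sup>* C D)"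

definition collection_of_cells :: "point set \<Rightarrow> bool" where
  "collection_of_cells P \<longleftrightarrow> finite P \<and> P \<noteq> {} \<and> weakly_connected P"

definition vertices :: "point set \<Rightarrow> point set" where
  "vertices P = (\<Union>c\<in>P. cell c)"

definition inner_interval :: "point set \<Rightarrow> point \<Rightarrow> point \<Rightarrow> bool" where
  "inner_interval P a b \<longleftrightarrow> proper a b \<and> (\<forall>c. cell c \<subseteq> interval a b \<longrightarrow> c \<in> P)"

type_synonym monm = "point \<Rightarrow>\<^sub>0 nat"
type_synonym 'k mpoly = "monm \<Rightarrow>\<^sub>0 'k"

definition Var :: "point \<Rightarrow> ('k::comm_semiring_1) mpoly" where
  "Var v = Poly_Mapping.single (Poly_Mapping.single v 1) 1"

definition monom :: "monm \<Rightarrow> 'k::comm_semiring_1 \<Rightarrow> 'k mpoly" where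
  "monom m c = Poly_Mapping.single m c"

text \<open>Membership in the polynomial ring S_P = K[x_v : v \<in> V(P)].\<close>
definition in_ring :: "point set \<Rightarrow> ('k::zero) mpoly \<Rightarrow> bool" where
  "in_ring V f \<longleftrightarrow> (\<forall>(m::monm). m \<in> Poly_Mapping.keys f \<longrightarrow> Poly_Mapping.keys m \<subseteq> V)"

definition mon_lcm :: "monm \<Rightarrow> monm \<Rightarrow> monm" where
  "mon_lcm m n = m + (n - m)"

definition mon_gcd :: "monm \<Rightarrow> monm \<Rightarrow> monm" where
  "mon_gcd m n = m - (m - n)"

definition monomial_order :: "point set \<Rightarrow> (monm \<Rightarrow> monm \<Rightarrow> bool) \<Rightarrow> bool" where
  "monomial_order V ord \<longleftrightarrow>
     (\<forall>m. Poly_Mapping.keys m \<subseteq> V \<longrightarrow> ord m m) \<and>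
     (\<forall>m n. Poly_Mapping.keys m \<subseteq> V \<longrightarrow> Poly_Mapping.keys n \<subseteq> V \<longrightarrow> ord m n \<longrightarrow> ord n m \<longrightarrow> m = n) \<and>
     (\<forall>m n l. Poly_Mapping.keys m \<subseteq> V \<longrightarrow> Poly_Mapping.keys n \<subseteq> V \<longrightarrow> Poly_Mapping.keys l \<subseteq> V \<longrightarrow>
         ord m n \<longrightarrow> ord n l \<longrightarrow> ord m l) \<and>
     (\<forall>m n. Poly_Mapping.keys m \<subseteq> V \<longrightarrow> Poly_Mapping.keys n \<subseteq> V \<longrightarrow> ord m n \<or> ord n m) \<and>
     (\<forall>m. Poly_Mapping.keys m \<subseteq> V \<longrightarrow> ord 0 m) \<and>
     (\<forall>m n l. Poly_Mapping.keys m \<subseteq> V \<longrightarrow> Poly_Mapping.keys n \<subseteq> V \<longrightarrow> Poly_Mapping.keys l \<subseteq> V \<longrightarrow>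
         ord m n \<longrightarrow> ord (m + l) (n + l))"

definition init :: "(monm \<Rightarrow> monm \<Rightarrow> bool) \<Rightarrow> ('k::zero) mpoly \<Rightarrow> monm" where
  "init ord f = (THE m. m \<in> Poly_Mapping.keys f \<and> (\<forall>m'\<in>Poly_Mapping.keys f. ord m' m))"

definition lcoeff :: "(monm \<Rightarrow> monm \<Rightarrow> bool) \<Rightarrow> ('k::zero) mpoly \<Rightarrow> 'k" where
  "lcoeff ord f = Poly_Mapping.lookup f (init ord f)"

definition spoly :: "(monm \<Rightarrow> monm \<Rightarrow> bool) \<Rightarrow> ('k::field) mpoly \<Rightarrow> 'k mpoly \<Rightarrow> 'k mpoly" where
  "spoly ord f g =
     (let L = mon_lcm (init ord f) (init ord g) in
       monom (L - init ord f) (inverse (lcoeff ord f)) * f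
       - monom (L - init ord g) (inverse (lcoeff ord g)) * g)"

text \<open>f reduces to 0 modulo G (Herzog--Hibi): f has a standard expression
  f = \<Sum> q_g g with q_g \<in> S_V and in(f) \<ge> in(q_g g) whenever q_g g \<noteq> 0.\<close>
definition reduces_to_zero ::
  "point set \<Rightarrow> (monm \<Rightarrow> monm \<Rightarrow> bool) \<Rightarrow> ('k::field) mpoly set \<Rightarrow> 'k mpoly \<Rightarrow> bool" where
  "reduces_to_zero V ord G f \<longleftrightarrow>
     (\<exists>q. \<exists>Gs \<subseteq> G. finite Gs \<and> (\<forall>g\<in>Gs. in_ring V (q g)) \<and>
        f = (\<Sum>g\<in>Gs. q g * g) \<and>
        (\<forall>g\<in>Gs. q g * g \<noteq> 0 \<longrightarrow> ord (init ord (q g * g)) (init ord f)))"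

definition minor :: "point \<Rightarrow> point \<Rightarrow> ('k::comm_ring_1) mpoly" where
  "minor a b = Var a * Var b - Var (fst a, snd b) * Var (fst b, snd a)"

definition inner_minors :: "point set \<Rightarrow> ('k::comm_ring_1) mpoly set" where
  "inner_minors P = {minor a b | a b. inner_interval P a b}"

end

theory Submission
  imports Defs
begin



abbreviation pkeys where "pkeys \<equiv> Poly_Mapping.keys"
abbreviation plookup where "plookup \<equiv> Poly_Mapping.lookup"
abbreviation psingle where "psingle \<equiv> Poly_Mapping.single"

lemma mo_props:
  assumes "monomial_order V ord"
  shows mo_refl: "pkeys m \<subseteq> V \<Longrightarrow> ord m m"
    and mo_antisym: "pkeys m \<subseteq> V \<Longrightarrow> pkeys n \<subseteq> V \<Longrightarrow> ord m n \<Longrightarrow> ord n m \<Longrightarrow> m = n"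
    and mo_trans: "pkeys m \<subseteq> V \<Longrightarrow> pkeys n \<subseteq> V \<Longrightarrow> pkeys l \<subseteq> V \<Longrightarrow> ord m n \<Longrightarrow> ord n l \<Longrightarrow> ord m l"
    and mo_total: "pkeys m \<subseteq> V \<Longrightarrow> pkeys n \<subseteq> V \<Longrightarrow> ord m n \<or> ord n m"
    and mo_add: "pkeys m \<subseteq> V \<Longrightarrow> pkeys n \<subseteq> V \<Longrightarrow> pkeys l \<subseteq> V \<Longrightarrow> ord m n \<Longrightarrow> ord (m + l) (n + l)"
  using assms unfolding monomial_order_def by blast+

lemma keys_add_nat: "pkeys ((m::monm) + n) = pkeys m \<union> pkeys n"
  by (auto simp: in_keys_iff lookup_add)

lemma exists_max:
  assumes mo: "monomial_order V ord" and "finite A" "A \<noteq> {}" "\<forall>m\<in>A. pkeys m \<subseteq> V"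
  shows "\<exists>m\<in>A. \<forall>m'\<in>A. ord m' m"
  using assms(2-4)
proof (induction A rule: finite_ne_induct)
  case (singleton x)
  then show ?case using mo_refl[OF mo] by auto
next
  case (insert x F)
  then obtain m where m: "m \<in> F" "\<forall>m'\<in>F. ord m' m" by auto
  show ?case
  proof (cases "ord m x")
    case True
    then show ?thesis using m insert mo_trans[OF mo, of _ m x] mo_refl[OF mo, of x] by auto
  next
    case False
    then have "ord x m" using mo_total[OF mo, of m x] insert m by auto
    then show ?thesis using m by auto
  qed
qed

lemma init_max:
  assumes mo: "monomial_order V ord" and "f \<noteq> 0" and "\<forall>m\<in>pkeys f. pkeys m \<subseteq> V"
  shows "init ord f \<in> pkeys f \<and> (\<forall>m'\<in>pkeys f. ord m' (init ord f))"
proof -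
  obtain m where m: "m \<in> pkeys f" "\<forall>m'\<in>pkeys f. ord m' m"
    using exists_max[OF mo, of "pkeys f"] assms by auto
  have "init ord f = m" unfolding init_def
  proof (rule the_equality)
    show "m \<in> pkeys f \<and> (\<forall>m'\<in>pkeys f. ord m' m)" using m by auto
  next
    fix n assume "n \<in> pkeys f \<and> (\<forall>m'\<in>pkeys f. ord m' n)"
    then show "n = m" using m mo_antisym[OF mo, of n m] assms(3) by auto
  qed
  then show ?thesis using m by auto
qed

lemma in_ring_mult:
  assumes "in_ring V q" "in_ring V g"
  shows "in_ring V (q * g)"
  unfolding in_ring_def
proof (intro allI impI)
  fix m assume "m \<in> pkeys (q * g)"
  then obtain a b where "m = a + b" "a \<in> pkeys q" "b \<in> pkeys g" using keys_mult[THEN subsetD] by fastforce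
  then show "pkeys m \<subseteq> V" using assms unfolding in_ring_def by (auto simp: keys_add_nat)
qed

lemma init_mult:
  fixes q g :: "'k::field mpoly"
  assumes mo: "monomial_order V ord" and q: "in_ring V q" and g: "in_ring V g" and qg: "q * g \<noteq> 0"
  shows "init ord (q * g) = init ord q + init ord g"
proof -
  have q0: "q \<noteq> 0" and g0: "g \<noteq> 0" using qg by auto
  define s0 where "s0 = init ord q"
  define t0 where "t0 = init ord g"
  have qV: "\<forall>m\<in>pkeys q. pkeys m \<subseteq> V" and gV: "\<forall>m\<in>pkeys g. pkeys m \<subseteq> V"
    using q g unfolding in_ring_def by auto
  have s0: "s0 \<in> pkeys q" "\<forall>m'\<in>pkeys q. ord m' s0" using init_max[OF mo q0 qV] s0_def by auto
  have t0: "t0 \<in> pkeys g" "\<forall>m'\<in>pkeys g. ord m' t0" using init_max[OF mo g0 gV] t0_def by auto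
  have s0V: "pkeys s0 \<subseteq> V" and t0V: "pkeys t0 \<subseteq> V" using s0 t0 qV gV by auto
  define q' where "q' = q - psingle s0 (plookup q s0)"
  define g' where "g' = g - psingle t0 (plookup g t0)"
  have kq': "pkeys q' = pkeys q - {s0}"
  proof -
    have "plookup q' x = (if x = s0 then 0 else plookup q x)" for x
      by (simp add: q'_def lookup_minus lookup_single when_def)
    then show ?thesis by (auto simp: in_keys_iff split: if_splits)
  qed
  have kg': "pkeys g' = pkeys g - {t0}"
  proof -
    have "plookup g' x = (if x = t0 then 0 else plookup g x)" for x
      by (simp add: g'_def lookup_minus lookup_single when_def)
    then show ?thesis by (auto simp: in_keys_iff split: if_splits)
  qed
  have dec: "q * g = psingle (s0 + t0) (plookup q s0 * plookup g t0) + (psingle s0 (plookup q s0) * g' + q' * psingle t0 (plookup g t0) + q' * g')"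
    by (simp add: q'_def g'_def algebra_simps mult_single add.commute)
  have nz: "plookup q s0 * plookup g t0 \<noteq> 0" using s0 t0 by (simp add: in_keys_iff)
  have notin: "s0 + t0 \<notin> pkeys (psingle s0 (plookup q s0) * g' + q' * psingle t0 (plookup g t0) + q' * g')"
  proof
    define A1 where "A1 = psingle s0 (plookup q s0) * g'"
    define A2 where "A2 = q' * psingle t0 (plookup g t0)"
    define A3 where "A3 = q' * g'"
    assume "s0 + t0 \<in> pkeys (psingle s0 (plookup q s0) * g' + q' * psingle t0 (plookup g t0) + q' * g')"
    then have H: "s0 + t0 \<in> pkeys (A1 + A2 + A3)" unfolding A1_def A2_def A3_def .
    have "s0 + t0 \<in> pkeys (A1 + A2) \<union> pkeys A3" by (rule keys_add[THEN subsetD, OF H])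
    then have "s0 + t0 \<in> pkeys A1 \<union> pkeys A2 \<union> pkeys A3" using keys_add[of A1 A2] by (auto simp del: in_keys_iff)
    then consider "s0 + t0 \<in> pkeys (psingle s0 (plookup q s0) * g')"
      | "s0 + t0 \<in> pkeys (q' * psingle t0 (plookup g t0))" | "s0 + t0 \<in> pkeys (q' * g')"
      unfolding A1_def A2_def A3_def by (auto simp del: in_keys_iff)
    then show False
    proof cases
      case 1
      then obtain a b where "s0 + t0 = a + b" "a \<in> pkeys (psingle s0 (plookup q s0))" "b \<in> pkeys g'"
        using keys_mult[THEN subsetD] by fastforce
      then show False using kg' by (cases "plookup q s0 = 0") auto
    next
      case 2
      then obtain a b where "s0 + t0 = a + b" "a \<in> pkeys q'" "b \<in> pkeys (psingle t0 (plookup g t0))"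
        using keys_mult[THEN subsetD] by fastforce
      then show False using kq' by (cases "plookup g t0 = 0") auto
    next
      case 3
      then obtain a b where ab: "s0 + t0 = a + b" "a \<in> pkeys q'" "b \<in> pkeys g'"
        using keys_mult[THEN subsetD] by fastforce
      have aV: "pkeys a \<subseteq> V" and bV: "pkeys b \<subseteq> V" using ab kq' kg' qV gV by auto
      have "ord a s0" "ord b t0" using ab kq' kg' s0 t0 by auto
      have 1: "ord (a + b) (s0 + b)" using mo_add[OF mo aV s0V bV \<open>ord a s0\<close>] .
      have 2: "ord (s0 + b) (s0 + t0)" using mo_add[OF mo bV t0V s0V \<open>ord b t0\<close>] by (metis add.commute)
      have 3: "ord (s0 + t0) (s0 + b)" using 1 ab(1) by metis
      have kV: "pkeys (s0+b) \<subseteq> V" "pkeys (s0+t0) \<subseteq> V" using s0V t0V bV by (auto simp: keys_add_nat)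
      have "s0 + b = s0 + t0" using mo_antisym[OF mo kV(2) kV(1) 3 2] by simp
      then have "b = t0" by simp
      then show False using ab kg' by auto
    qed
  qed
  have in_qg: "s0 + t0 \<in> pkeys (q * g)"
    using notin nz by (subst dec) (auto simp: in_keys_iff lookup_add)
  have qgV: "\<forall>m\<in>pkeys (q*g). pkeys m \<subseteq> V" using in_ring_mult[OF q g] unfolding in_ring_def by auto
  have le: "\<forall>m\<in>pkeys (q*g). ord m (s0 + t0)"
  proof
    fix m assume "m \<in> pkeys (q*g)"
    then obtain a b where ab: "m = a + b" "a \<in> pkeys q" "b \<in> pkeys g" using keys_mult[THEN subsetD] by fastforce
    have aV: "pkeys a \<subseteq> V" and bV: "pkeys b \<subseteq> V" using ab qV gV by auto
    have "ord a s0" "ord b t0" using ab s0 t0 by auto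
    have 1: "ord (a + b) (s0 + b)" using mo_add[OF mo aV s0V bV \<open>ord a s0\<close>] .
    have 2: "ord (s0 + b) (s0 + t0)" using mo_add[OF mo bV t0V s0V \<open>ord b t0\<close>] by (metis add.commute)
    show "ord m (s0 + t0)" using mo_trans[OF mo _ _ _ 1 2] ab aV bV s0V t0V by (simp add: keys_add_nat)
  qed
  have "init ord (q*g) \<in> pkeys (q*g) \<and> (\<forall>m'\<in>pkeys (q*g). ord m' (init ord (q*g)))"
    using init_max[OF mo qg qgV] .
  then have "init ord (q*g) = s0 + t0"
    using le in_qg mo_antisym[OF mo, of "init ord (q*g)" "s0 + t0"] qgV by blast
  then show ?thesis using s0_def t0_def by simp
qed

lemma rtz_divides:
  fixes S :: "'k::field mpoly"
  assumes mo: "monomial_order V ord" and r: "reduces_to_zero V ord G S" and S0: "S \<noteq> 0"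
    and SV: "in_ring V S" and GV: "\<forall>g\<in>G. in_ring V g"
  shows "\<exists>g\<in>G. g \<noteq> 0 \<and> (\<exists>u. init ord S = u + init ord g)"
proof -
  obtain q Gs where Gs: "Gs \<subseteq> G" "finite Gs" "\<forall>g\<in>Gs. in_ring V (q g)"
    "S = (\<Sum>g\<in>Gs. q g * g)" "\<forall>g\<in>Gs. q g * g \<noteq> 0 \<longrightarrow> ord (init ord (q g * g)) (init ord S)"
    using r unfolding reduces_to_zero_def by blast
  have SV': "\<forall>m\<in>pkeys S. pkeys m \<subseteq> V" using SV unfolding in_ring_def by auto
  define m where "m = init ord S"
  have m: "m \<in> pkeys S" using init_max[OF mo S0 SV'] m_def by auto
  then have "plookup S m \<noteq> 0" by (simp add: in_keys_iff)
  then have "(\<Sum>g\<in>Gs. plookup (q g * g) m) \<noteq> 0" using Gs(4) by (simp add: lookup_sum)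
  then obtain g where g: "g \<in> Gs" "plookup (q g * g) m \<noteq> 0" by (meson sum.neutral)
  have gG: "in_ring V g" using g Gs GV by auto
  have qgV: "in_ring V (q g * g)" using in_ring_mult Gs(3) g gG by blast
  have mk: "m \<in> pkeys (q g * g)" using g by (simp add: in_keys_iff)
  then have nz: "q g * g \<noteq> 0" by auto
  have mV: "pkeys m \<subseteq> V" using SV' m by auto
  have iV: "pkeys (init ord (q g * g)) \<subseteq> V"
    using init_max[OF mo nz] qgV unfolding in_ring_def by blast
  have "ord m (init ord (q g * g))" using init_max[OF mo nz] qgV mk unfolding in_ring_def by blast
  moreover have "ord (init ord (q g * g)) m" using Gs(5) g nz m_def by auto
  ultimately have "m = init ord (q g * g)" using mo_antisym[OF mo mV iV] by blast
  also have "\<dots> = init ord (q g) + init ord g" using init_mult[OF mo _ gG nz] Gs(3) g by blast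
  finally show ?thesis using g Gs nz m_def by (intro bexI[of _ g]) auto
qed




definition X :: "point \<Rightarrow> monm" where "X v = psingle v 1"

lemma lookup_X: "plookup (X v) w = (if w = v then 1 else 0)"
  by (simp add: X_def lookup_single when_def)

lemma keys_X: "pkeys (X v) = {v}" by (simp add: X_def)

lemma minor_eq: "minor x y = psingle (X x + X y) 1 - psingle (X (fst x, snd y) + X (fst y, snd x)) (1::'k::comm_ring_1)"
  by (simp add: minor_def Var_def mult_single X_def)

lemma sub_inner:
  assumes "inner_interval P x y" "pt_le x x'" "pt_le y' y" "proper x' y'"
  shows "inner_interval P x' y'"
proof -
  have "interval x' y' \<subseteq> interval x y"
    using assms(2,3) unfolding interval_def pt_le_def by auto
  then show ?thesis using assms(1,4) unfolding inner_interval_def by blast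
qed

lemma cell_sub: "fst x \<le> fst c \<Longrightarrow> snd x \<le> snd c \<Longrightarrow> fst c + 1 \<le> fst y \<Longrightarrow> snd c + 1 \<le> snd y \<Longrightarrow> cell c \<subseteq> interval x y"
  unfolding cell_def interval_def pt_le_def by auto

lemma corner_in_V:
  assumes "inner_interval P x y" and "v \<in> {x, y, (fst x, snd y), (fst y, snd x)}"
  shows "v \<in> vertices P"
proof -
  have pr: "fst x < fst y" "snd x < snd y" using assms(1) unfolding inner_interval_def proper_def by auto
  have H: "c \<in> P" if "fst x \<le> fst c" "snd x \<le> snd c" "fst c + 1 \<le> fst y" "snd c + 1 \<le> snd y" for c
    using assms(1) cell_sub[OF that] unfolding inner_interval_def by blast
  have "\<exists>c. fst x \<le> fst c \<and> snd x \<le> snd c \<and> fst c + 1 \<le> fst y \<and> snd c + 1 \<le> snd y \<and> v \<in> cell c"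
    using assms(2) pr
    apply (elim insertE emptyE)
       apply (rule exI[of _ x]; simp add: cell_def interval_def pt_le_def)
      apply (rule exI[of _ "(fst y - 1, snd y - 1)"]; simp add: cell_def interval_def pt_le_def)
     apply (rule exI[of _ "(fst x, snd y - 1)"]; simp add: cell_def interval_def pt_le_def)
    apply (rule exI[of _ "(fst y - 1, snd x)"]; simp add: cell_def interval_def pt_le_def)
    done
  then show ?thesis using H unfolding vertices_def by blast
qed

lemma XX_neq: "{x, y} \<noteq> {c, d} \<Longrightarrow> x \<noteq> y \<Longrightarrow> X x + X y \<noteq> X c + X d"
proof
  assume "{x, y} \<noteq> {c, d}" "x \<noteq> y" "X x + X y = X c + X d"
  then have H: "\<And>w. plookup (X x + X y) w = plookup (X c + X d) w" by simp
  have "x \<in> {c, d}" using H[of x] \<open>x \<noteq> y\<close> by (auto simp: lookup_add lookup_X split: if_splits)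
  moreover have "y \<in> {c, d}" using H[of y] \<open>x \<noteq> y\<close> by (auto simp: lookup_add lookup_X split: if_splits)
  moreover have "c \<in> {x, y}" using H[of c] by (auto simp: lookup_add lookup_X split: if_splits)
  moreover have "d \<in> {x, y}" using H[of d] by (auto simp: lookup_add lookup_X split: if_splits)
  ultimately show False using \<open>{x, y} \<noteq> {c, d}\<close> by blast
qed

lemma minor_keys:
  assumes "proper x y"
  shows "pkeys (minor x y :: 'k::comm_ring_1 mpoly) = {X x + X y, X (fst x, snd y) + X (fst y, snd x)}"
    and "X x + X y \<noteq> X (fst x, snd y) + X (fst y, snd x)"
proof -
  show ne: "X x + X y \<noteq> X (fst x, snd y) + X (fst y, snd x)"
    apply (rule XX_neq) using assms unfolding proper_def by (auto simp: prod_eq_iff doubleton_eq_iff)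
  show "pkeys (minor x y :: 'k::comm_ring_1 mpoly) = {X x + X y, X (fst x, snd y) + X (fst y, snd x)}"
    using ne by (auto simp: minor_eq in_keys_iff lookup_minus lookup_single when_def split: if_splits)
qed

lemma minor_lookup1:
  assumes "proper x y"
  shows "plookup (minor x y :: 'k::comm_ring_1 mpoly) (X x + X y) = 1"
    and "plookup (minor x y :: 'k::comm_ring_1 mpoly) (X (fst x, snd y) + X (fst y, snd x)) = -1"
  using minor_keys(2)[OF assms] by (auto simp: minor_eq lookup_minus lookup_single when_def)

lemma keys_XX: "pkeys (X x + X y) = {x, y}"
  by (auto simp: keys_add_nat keys_X)

lemma minor_in_ring:
  assumes "inner_interval P x y"
  shows "in_ring (vertices P) (minor x y :: 'k::comm_ring_1 mpoly)"
  unfolding in_ring_def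
proof (intro allI impI)
  fix m assume m: "m \<in> pkeys (minor x y :: 'k mpoly)"
  have pr: "proper x y" using assms unfolding inner_interval_def by auto
  have "m \<in> {X x + X y, X (fst x, snd y) + X (fst y, snd x)}" using m minor_keys(1)[OF pr] by blast
  then show "pkeys m \<subseteq> vertices P" using corner_in_V[OF assms] by (auto simp: keys_XX)
qed

lemma init_minor:
  assumes mo: "monomial_order (vertices P) ord" and "inner_interval P x y"
  shows "init ord (minor x y :: 'k::comm_ring_1 mpoly) \<in> {X x + X y, X (fst x, snd y) + X (fst y, snd x)}"
proof -
  have pr: "proper x y" using assms unfolding inner_interval_def by auto
  have k: "pkeys (minor x y :: 'k mpoly) = {X x + X y, X (fst x, snd y) + X (fst y, snd x)}"
    by (rule minor_keys(1)[OF pr])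
  have r: "in_ring (vertices P) (minor x y :: 'k mpoly)" by (rule minor_in_ring[OF assms(2)])
  have "minor x y \<noteq> (0::'k mpoly)" using k by auto
  then show ?thesis using init_max[OF mo, of "minor x y :: 'k mpoly"] r k unfolding in_ring_def by blast
qed

lemma div3:
  assumes "X e1 + X e2 + X e3 = u + (X s + X t)"
  shows "s \<in> {e1, e2, e3} \<and> t \<in> {e1, e2, e3}"
proof -
  have "plookup (X e1 + X e2 + X e3) s \<noteq> 0" "plookup (X e1 + X e2 + X e3) t \<noteq> 0"
    unfolding assms by (simp_all add: lookup_add lookup_X)
  then show ?thesis by (auto simp: lookup_add lookup_X split: if_splits)
qed




lemma gcd_disj:
  assumes "{x, y} \<inter> {z, w} = {}"
  shows "mon_gcd (X x + X y) (X z + X w) = 0"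
  by (rule poly_mapping_eqI) (use assms in \<open>auto simp: mon_gcd_def lookup_minus lookup_add lookup_X\<close>)

lemma spoly_gen:
  fixes f g :: "'k::field mpoly"
  assumes "init ord f = X w + X u" "init ord g = X w + X v" "u \<noteq> v" "w \<noteq> v" "w \<noteq> u"
  shows "spoly ord f g = monom (X v) (inverse (lcoeff ord f)) * f - monom (X u) (inverse (lcoeff ord g)) * g"
proof -
  have L: "mon_lcm (X w + X u) (X w + X v) = X w + X u + X v"
    by (rule poly_mapping_eqI) (use assms in \<open>auto simp: mon_lcm_def lookup_minus lookup_add lookup_X\<close>)
  have 1: "X w + X u + X v - (X w + X u) = X v"
    by (rule poly_mapping_eqI) (use assms in \<open>auto simp: lookup_minus lookup_add lookup_X\<close>)
  have 2: "X w + X u + X v - (X w + X v) = X u"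
    by (rule poly_mapping_eqI) (use assms in \<open>auto simp: lookup_minus lookup_add lookup_X\<close>)
  show ?thesis unfolding spoly_def Let_def assms(1,2) L 1 2 ..
qed

lemma inner_minor_ring:
  assumes "g \<in> inner_minors P"
  shows "in_ring (vertices P) (g :: 'k::comm_ring_1 mpoly)"
  using assms minor_in_ring unfolding inner_minors_def by blast

lemma two_mon:
  fixes S :: "'k::field mpoly"
  assumes mo: "monomial_order (vertices P) ord"
    and r: "reduces_to_zero (vertices P) ord (inner_minors P) S"
    and S: "S = psingle M1 1 - psingle M2 1" and ne: "M1 \<noteq> M2"
    and V: "pkeys M1 \<subseteq> vertices P" "pkeys M2 \<subseteq> vertices P"
  shows "\<exists>x y u. inner_interval P x y \<and> (init ord S = M1 \<or> init ord S = M2) \<and>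
     init ord S = u + init ord (minor x y :: 'k mpoly) \<and>
     init ord (minor x y :: 'k mpoly) \<in> {X x + X y, X (fst x, snd y) + X (fst y, snd x)}"
proof -
  have kS: "pkeys S = {M1, M2}"
    using ne by (auto simp: S in_keys_iff lookup_minus lookup_single when_def split: if_splits)
  then have S0: "S \<noteq> 0" by auto
  have SV: "in_ring (vertices P) S" using kS V unfolding in_ring_def by auto
  have SV': "\<forall>m\<in>pkeys S. pkeys m \<subseteq> vertices P" using SV unfolding in_ring_def by auto
  have iS: "init ord S = M1 \<or> init ord S = M2" using init_max[OF mo S0 SV'] kS by auto
  have GV: "\<forall>g\<in>inner_minors P. in_ring (vertices P) (g :: 'k mpoly)" using inner_minor_ring by blast
  obtain g :: "'k mpoly" where g: "g \<in> inner_minors P" "g \<noteq> 0" "\<exists>u. init ord S = u + init ord g"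
    using rtz_divides[OF mo r S0 SV GV] by blast
  obtain x y where xy: "g = minor x y" "inner_interval P x y" using g(1) unfolding inner_minors_def by blast
  show ?thesis using xy g(3) iS init_minor[OF mo xy(2)] by blast
qed




lemma no_sub:
  assumes "\<not> inner_interval P c d" "proper c d" "inner_interval P x y" "pt_le x c" "pt_le d y"
  shows False
  using sub_inner[OF assms(3,4,5,2)] assms(1) by blast

lemma part1_contra:
  fixes a1 a2 b1 b2 c1 c2 :: int and ord
  assumes lt: "a1 < b1" "b1 < c1" "a2 < b2" "b2 < c2"
    and nc1: "\<not> inner_interval P (a1, b2) (b1, c2)"
    and nc2: "\<not> inner_interval P (b1, a2) (c1, b2)"
    and i1: "init ord (minor (a1, a2) (b1, b2) :: 'k::comm_ring_1 mpoly) = X (a1, a2) + X (b1, b2)"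
    and i2: "init ord (minor (b1, b2) (c1, c2) :: 'k mpoly) = X (b1, b2) + X (c1, c2)"
    and xy: "inner_interval P x y"
    and M: "M = X (a1, a2) + X (b1, c2) + X (c1, b2) \<or> M = X (c1, c2) + X (a1, b2) + X (b1, a2)"
    and u: "M = u + init ord (minor x y :: 'k mpoly)"
    and im: "init ord (minor x y :: 'k mpoly) \<in> {X x + X y, X (fst x, snd y) + X (fst y, snd x)}"
  shows False
proof -
  obtain x1 x2 y1 y2 where xs: "x = (x1, x2)" "y = (y1, y2)" by (cases x, cases y) auto
  have pr: "x1 < y1" "x2 < y2" using xy xs unfolding inner_interval_def proper_def by auto
  have A: False if "pt_le x (a1, b2)" "pt_le (b1, c2) y"
    using no_sub[OF nc1 _ xy that] lt by (auto simp: proper_def)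
  have B: False if "pt_le x (b1, a2)" "pt_le (c1, b2) y"
    using no_sub[OF nc2 _ xy that] lt by (auto simp: proper_def)
  have n1: "X (a1, a2) + X (b1, b2) \<noteq> X (a1, b2) + X (b1, a2)"
    using minor_keys(2)[of "(a1,a2)" "(b1,b2)"] lt by (simp add: proper_def)
  have n2: "X (b1, b2) + X (c1, c2) \<noteq> X (b1, c2) + X (c1, b2)"
    using minor_keys(2)[of "(b1,b2)" "(c1,c2)"] lt by (simp add: proper_def)
  from im show False
  proof
    assume e: "init ord (minor x y :: 'k mpoly) = X x + X y"
    from M show False
    proof
      assume "M = X (a1, a2) + X (b1, c2) + X (c1, b2)"
      then have "x \<in> {(a1, a2), (b1, c2), (c1, b2)} \<and> y \<in> {(a1, a2), (b1, c2), (c1, b2)}"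
        using div3 u e by metis
      then show False using A B pr lt xs by (auto simp: pt_le_def)
    next
      assume "M = X (c1, c2) + X (a1, b2) + X (b1, a2)"
      then have "x \<in> {(c1, c2), (a1, b2), (b1, a2)} \<and> y \<in> {(c1, c2), (a1, b2), (b1, a2)}"
        using div3 u e by metis
      then show False using A B pr lt xs by (auto simp: pt_le_def)
    qed
  next
    assume "init ord (minor x y :: 'k mpoly) \<in> {X (fst x, snd y) + X (fst y, snd x)}"
    then have e: "init ord (minor x y :: 'k mpoly) = X (x1, y2) + X (y1, x2)" using xs by simp
    from M show False
    proof
      assume "M = X (a1, a2) + X (b1, c2) + X (c1, b2)"
      then have "(x1, y2) \<in> {(a1, a2), (b1, c2), (c1, b2)} \<and> (y1, x2) \<in> {(a1, a2), (b1, c2), (c1, b2)}"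
        using div3 u e by metis
      then have "x = (b1, b2) \<and> y = (c1, c2)" using pr lt xs by auto
      then show False using e i2 n2 xs by simp
    next
      assume "M = X (c1, c2) + X (a1, b2) + X (b1, a2)"
      then have "(x1, y2) \<in> {(c1, c2), (a1, b2), (b1, a2)} \<and> (y1, x2) \<in> {(c1, c2), (a1, b2), (b1, a2)}"
        using div3 u e by metis
      then have "x = (a1, a2) \<and> y = (b1, b2)" using pr lt xs by auto
      then show False using e i1 n1 xs by simp
    qed
  qed
qed




lemma part2_contra:
  fixes b1 b2 r1 p2 q1 s2 :: int and ord
  assumes lt: "r1 < b1" "b1 < q1" "p2 < b2" "b2 < s2"
    and nc1: "\<not> inner_interval P (r1, p2) (b1, b2)"
    and nc2: "\<not> inner_interval P (b1, b2) (q1, s2)"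
    and i1: "init ord (minor (b1, p2) (q1, b2) :: 'k::comm_ring_1 mpoly) = X (b1, b2) + X (q1, p2)"
    and i2: "init ord (minor (r1, b2) (b1, s2) :: 'k mpoly) = X (r1, s2) + X (b1, b2)"
    and xy: "inner_interval P x y"
    and M: "M = X (q1, p2) + X (r1, b2) + X (b1, s2) \<or> M = X (r1, s2) + X (b1, p2) + X (q1, b2)"
    and u: "M = u + init ord (minor x y :: 'k mpoly)"
    and im: "init ord (minor x y :: 'k mpoly) \<in> {X x + X y, X (fst x, snd y) + X (fst y, snd x)}"
  shows False
proof -
  obtain x1 x2 y1 y2 where xs: "x = (x1, x2)" "y = (y1, y2)" by (cases x, cases y) auto
  have pr: "x1 < y1" "x2 < y2" using xy xs unfolding inner_interval_def proper_def by auto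
  have A: False if "pt_le x (r1, p2)" "pt_le (b1, b2) y"
    using no_sub[OF nc1 _ xy that] lt by (auto simp: proper_def)
  have B: False if "pt_le x (b1, b2)" "pt_le (q1, s2) y"
    using no_sub[OF nc2 _ xy that] lt by (auto simp: proper_def)
  have n1: "X (b1, p2) + X (q1, b2) \<noteq> X (b1, b2) + X (q1, p2)"
    using minor_keys(2)[of "(b1,p2)" "(q1,b2)"] lt by (simp add: proper_def)
  have n2: "X (r1, b2) + X (b1, s2) \<noteq> X (r1, s2) + X (b1, b2)"
    using minor_keys(2)[of "(r1,b2)" "(b1,s2)"] lt by (simp add: proper_def)
  from im show False
  proof
    assume e: "init ord (minor x y :: 'k mpoly) = X x + X y"
    from M show False
    proof
      assume "M = X (q1, p2) + X (r1, b2) + X (b1, s2)"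
      then have "x \<in> {(q1, p2), (r1, b2), (b1, s2)} \<and> y \<in> {(q1, p2), (r1, b2), (b1, s2)}"
        using div3 u e by metis
      then have "x = (r1, b2) \<and> y = (b1, s2)" using pr lt xs by auto
      then show False using e i2 n2 xs by simp
    next
      assume "M = X (r1, s2) + X (b1, p2) + X (q1, b2)"
      then have "x \<in> {(r1, s2), (b1, p2), (q1, b2)} \<and> y \<in> {(r1, s2), (b1, p2), (q1, b2)}"
        using div3 u e by metis
      then have "x = (b1, p2) \<and> y = (q1, b2)" using pr lt xs by auto
      then show False using e i1 n1 xs by simp
    qed
  next
    assume "init ord (minor x y :: 'k mpoly) \<in> {X (fst x, snd y) + X (fst y, snd x)}"
    then have e: "init ord (minor x y :: 'k mpoly) = X (x1, y2) + X (y1, x2)" using xs by simp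
    from M show False
    proof
      assume "M = X (q1, p2) + X (r1, b2) + X (b1, s2)"
      then have "(x1, y2) \<in> {(q1, p2), (r1, b2), (b1, s2)} \<and> (y1, x2) \<in> {(q1, p2), (r1, b2), (b1, s2)}"
        using div3 u e by metis
      then show False using A B pr lt xs by (auto simp: pt_le_def)
    next
      assume "M = X (r1, s2) + X (b1, p2) + X (q1, b2)"
      then have "(x1, y2) \<in> {(r1, s2), (b1, p2), (q1, b2)} \<and> (y1, x2) \<in> {(r1, s2), (b1, p2), (q1, b2)}"
        using div3 u e by metis
      then show False using A B pr lt xs by (auto simp: pt_le_def)
    qed
  qed
qed




lemma spoly1:
  fixes a1 a2 b1 b2 c1 c2 :: int
  shows "psingle (X (c1, c2)) 1 * (minor (a1, a2) (b1, b2) :: 'k::comm_ring_1 mpoly) - psingle (X (a1, a2)) 1 * minor (b1, b2) (c1, c2)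
    = psingle (X (a1, a2) + X (b1, c2) + X (c1, b2)) 1 - psingle (X (c1, c2) + X (a1, b2) + X (b1, a2)) 1"
  by (simp add: minor_eq mult_single algebra_simps add_ac)

lemma single_neg1: "psingle k (-1::'k::comm_ring_1) = - psingle k 1"
  by (rule poly_mapping_eqI) (simp add: lookup_single when_def)

lemma spoly2:
  fixes b1 b2 r1 p2 q1 s2 :: int
  shows "psingle (X (r1, s2)) (-1) * (minor (b1, p2) (q1, b2) :: 'k::comm_ring_1 mpoly) - psingle (X (q1, p2)) (-1) * minor (r1, b2) (b1, s2)
    = psingle (X (q1, p2) + X (r1, b2) + X (b1, s2)) 1 - psingle (X (r1, s2) + X (b1, p2) + X (q1, b2)) 1"
  by (simp add: minor_eq mult_single algebra_simps add_ac single_neg1)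




lemma part1:
  fixes P :: "point set" and ord :: "monm \<Rightarrow> monm \<Rightarrow> bool"
  assumes mo: "monomial_order (vertices P) ord"
    and lt: "fst a < fst b" "fst b < fst \<beta>" "snd a < snd b" "snd b < snd \<beta>"
    and in1: "inner_interval P a b" and in2: "inner_interval P b \<beta>"
    and r: "reduces_to_zero (vertices P) ord (inner_minors P) (spoly ord (minor a b :: 'k::field mpoly) (minor b \<beta>))"
    and nc1: "\<not> inner_interval P (fst a, snd b) (fst b, snd \<beta>)"
    and nc2: "\<not> inner_interval P (fst b, snd a) (fst \<beta>, snd b)"
  shows "mon_gcd (init ord (minor a b :: 'k mpoly)) (init ord (minor b \<beta> :: 'k mpoly)) = 0"
proof -
  obtain a1 a2 b1 b2 c1 c2 where pts: "a = (a1, a2)" "b = (b1, b2)" "\<beta> = (c1, c2)"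
    by (cases a, cases b, cases \<beta>) auto
  have lt': "a1 < b1" "b1 < c1" "a2 < b2" "b2 < c2" using lt pts by auto
  have pr1: "proper a b" and pr2: "proper b \<beta>" using in1 in2 unfolding inner_interval_def by auto
  have f: "init ord (minor a b :: 'k mpoly) \<in> {X a + X b, X (a1, b2) + X (b1, a2)}"
    using init_minor[OF mo in1] pts by simp
  have g: "init ord (minor b \<beta> :: 'k mpoly) \<in> {X b + X \<beta>, X (b1, c2) + X (c1, b2)}"
    using init_minor[OF mo in2] pts by simp
  show ?thesis
  proof (rule ccontr)
    assume gcd: "mon_gcd (init ord (minor a b :: 'k mpoly)) (init ord (minor b \<beta> :: 'k mpoly)) \<noteq> 0"
    have fi: "init ord (minor a b :: 'k mpoly) = X a + X b"
    proof (rule ccontr)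
      assume "init ord (minor a b :: 'k mpoly) \<noteq> X a + X b"
      then have "init ord (minor a b :: 'k mpoly) = X (a1, b2) + X (b1, a2)" using f by auto
      moreover have "mon_gcd (X (a1, b2) + X (b1, a2)) (X b + X \<beta>) = 0"
        by (rule gcd_disj) (use lt' pts in auto)
      moreover have "mon_gcd (X (a1, b2) + X (b1, a2)) (X (b1, c2) + X (c1, b2)) = 0"
        by (rule gcd_disj) (use lt' pts in auto)
      ultimately show False using g gcd by auto
    qed
    have gi: "init ord (minor b \<beta> :: 'k mpoly) = X b + X \<beta>"
    proof (rule ccontr)
      assume "init ord (minor b \<beta> :: 'k mpoly) \<noteq> X b + X \<beta>"
      then have "init ord (minor b \<beta> :: 'k mpoly) = X (b1, c2) + X (c1, b2)" using g by auto
      moreover have "mon_gcd (X a + X b) (X (b1, c2) + X (c1, b2)) = 0"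
        by (rule gcd_disj) (use lt' pts in auto)
      ultimately show False using fi gcd by auto
    qed
    have lc1: "lcoeff ord (minor a b :: 'k mpoly) = 1"
      unfolding lcoeff_def fi by (rule minor_lookup1(1)[OF pr1])
    have lc2: "lcoeff ord (minor b \<beta> :: 'k mpoly) = 1"
      unfolding lcoeff_def gi by (rule minor_lookup1(1)[OF pr2])
    have fi': "init ord (minor a b :: 'k mpoly) = X b + X a" using fi by (simp add: add.commute)
    have S: "spoly ord (minor a b :: 'k mpoly) (minor b \<beta>) =
        psingle (X (a1, a2) + X (b1, c2) + X (c1, b2)) 1 - psingle (X (c1, c2) + X (a1, b2) + X (b1, a2)) 1"
    proof -
      have sg: "spoly ord (minor a b :: 'k mpoly) (minor b \<beta>) = monom (X \<beta>) (inverse (lcoeff ord (minor a b :: 'k mpoly))) * minor a b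
          - monom (X a) (inverse (lcoeff ord (minor b \<beta> :: 'k mpoly))) * minor b \<beta>"
        by (rule spoly_gen[OF fi' gi]) (use pts lt' in auto)
      show ?thesis unfolding sg lc1 lc2 monom_def using spoly1 pts by simp
    qed
    have ne: "X (a1, a2) + X (b1, c2) + X (c1, b2) \<noteq> X (c1, c2) + X (a1, b2) + X (b1, a2)"
    proof
      assume "X (a1, a2) + X (b1, c2) + X (c1, b2) = X (c1, c2) + X (a1, b2) + X (b1, a2)"
      then have "plookup (X (a1, a2) + X (b1, c2) + X (c1, b2)) (a1, a2) = plookup (X (c1, c2) + X (a1, b2) + X (b1, a2)) (a1, a2)"
        by simp
      then show False using lt' by (simp add: lookup_add lookup_X)
    qed
    have V1: "pkeys (X (a1, a2) + X (b1, c2) + X (c1, b2)) \<subseteq> vertices P"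
      using corner_in_V[OF in1] corner_in_V[OF in2] pts by (auto simp: keys_add_nat keys_X)
    have V2: "pkeys (X (c1, c2) + X (a1, b2) + X (b1, a2)) \<subseteq> vertices P"
      using corner_in_V[OF in1] corner_in_V[OF in2] pts by (auto simp: keys_add_nat keys_X)
    obtain x y u where xy: "inner_interval P x y"
      "init ord (spoly ord (minor a b :: 'k mpoly) (minor b \<beta>)) = X (a1, a2) + X (b1, c2) + X (c1, b2) \<or>
       init ord (spoly ord (minor a b :: 'k mpoly) (minor b \<beta>)) = X (c1, c2) + X (a1, b2) + X (b1, a2)"
      "init ord (spoly ord (minor a b :: 'k mpoly) (minor b \<beta>)) = u + init ord (minor x y :: 'k mpoly)"
      "init ord (minor x y :: 'k mpoly) \<in> {X x + X y, X (fst x, snd y) + X (fst y, snd x)}"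
      using two_mon[OF mo r S ne V1 V2] by blast
    show False
      using part1_contra[OF lt' nc1[unfolded pts, simplified] nc2[unfolded pts, simplified]
          fi[unfolded pts] gi[unfolded pts] xy(1) xy(2) xy(3) xy(4)] .
  qed
qed




lemma part2:
  fixes P :: "point set" and ord :: "monm \<Rightarrow> monm \<Rightarrow> bool"
  assumes mo: "monomial_order (vertices P) ord"
    and in1: "inner_interval P p q" and in2: "inner_interval P p' q'"
    and hb1: "b = (fst p, snd q)" and hb2: "b = (fst q', snd p')"
    and r: "reduces_to_zero (vertices P) ord (inner_minors P) (spoly ord (minor p q :: 'k::field mpoly) (minor p' q'))"
    and nc1: "\<not> inner_interval P (fst p', snd p) b"
    and nc2: "\<not> inner_interval P b (fst q, snd q')"
  shows "mon_gcd (init ord (minor p q :: 'k mpoly)) (init ord (minor p' q' :: 'k mpoly)) = 0"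
proof -
  obtain b1 p2 q1 b2 r1 s2 where pts: "p = (b1, p2)" "q = (q1, b2)" "p' = (r1, b2)" "q' = (b1, s2)" "b = (b1, b2)"
    using hb1 hb2 by (cases p, cases q, cases p', cases q') auto
  have pr1: "proper p q" and pr2: "proper p' q'" using in1 in2 unfolding inner_interval_def by auto
  have lt': "r1 < b1" "b1 < q1" "p2 < b2" "b2 < s2" using pr1 pr2 pts unfolding proper_def by auto
  have f: "init ord (minor p q :: 'k mpoly) \<in> {X p + X q, X (b1, b2) + X (q1, p2)}"
    using init_minor[OF mo in1] pts by simp
  have g: "init ord (minor p' q' :: 'k mpoly) \<in> {X p' + X q', X (r1, s2) + X (b1, b2)}"
    using init_minor[OF mo in2] pts by simp
  show ?thesis
  proof (rule ccontr)
    assume gcd: "mon_gcd (init ord (minor p q :: 'k mpoly)) (init ord (minor p' q' :: 'k mpoly)) \<noteq> 0"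
    have fi: "init ord (minor p q :: 'k mpoly) = X (b1, b2) + X (q1, p2)"
    proof (rule ccontr)
      assume "init ord (minor p q :: 'k mpoly) \<noteq> X (b1, b2) + X (q1, p2)"
      then have "init ord (minor p q :: 'k mpoly) = X p + X q" using f by auto
      moreover have "mon_gcd (X p + X q) (X p' + X q') = 0"
        by (rule gcd_disj) (use lt' pts in auto)
      moreover have "mon_gcd (X p + X q) (X (r1, s2) + X (b1, b2)) = 0"
        by (rule gcd_disj) (use lt' pts in auto)
      ultimately show False using g gcd by auto
    qed
    have gi: "init ord (minor p' q' :: 'k mpoly) = X (r1, s2) + X (b1, b2)"
    proof (rule ccontr)
      assume "init ord (minor p' q' :: 'k mpoly) \<noteq> X (r1, s2) + X (b1, b2)"
      then have "init ord (minor p' q' :: 'k mpoly) = X p' + X q'" using g by auto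
      moreover have "mon_gcd (X (b1, b2) + X (q1, p2)) (X p' + X q') = 0"
        by (rule gcd_disj) (use lt' pts in auto)
      ultimately show False using fi gcd by auto
    qed
    have lc1: "lcoeff ord (minor p q :: 'k mpoly) = -1"
      unfolding lcoeff_def fi using minor_lookup1(2)[OF pr1] pts by simp
    have lc2: "lcoeff ord (minor p' q' :: 'k mpoly) = -1"
      unfolding lcoeff_def gi using minor_lookup1(2)[OF pr2] pts by simp
    have gi': "init ord (minor p' q' :: 'k mpoly) = X (b1, b2) + X (r1, s2)" using gi by (simp add: add.commute)
    have S: "spoly ord (minor p q :: 'k mpoly) (minor p' q') =
        psingle (X (q1, p2) + X (r1, b2) + X (b1, s2)) 1 - psingle (X (r1, s2) + X (b1, p2) + X (q1, b2)) 1"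
    proof -
      have sg: "spoly ord (minor p q :: 'k mpoly) (minor p' q') = monom (X (r1, s2)) (inverse (lcoeff ord (minor p q :: 'k mpoly))) * minor p q
          - monom (X (q1, p2)) (inverse (lcoeff ord (minor p' q' :: 'k mpoly))) * minor p' q'"
        by (rule spoly_gen[OF fi gi']) (use pts lt' in auto)
      show ?thesis unfolding sg lc1 lc2 monom_def using spoly2 pts by simp
    qed
    have ne: "X (q1, p2) + X (r1, b2) + X (b1, s2) \<noteq> X (r1, s2) + X (b1, p2) + X (q1, b2)"
    proof
      assume "X (q1, p2) + X (r1, b2) + X (b1, s2) = X (r1, s2) + X (b1, p2) + X (q1, b2)"
      then have "plookup (X (q1, p2) + X (r1, b2) + X (b1, s2)) (q1, p2) = plookup (X (r1, s2) + X (b1, p2) + X (q1, b2)) (q1, p2)"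
        by simp
      then show False using lt' by (simp add: lookup_add lookup_X)
    qed
    have V1: "pkeys (X (q1, p2) + X (r1, b2) + X (b1, s2)) \<subseteq> vertices P"
      using corner_in_V[OF in1] corner_in_V[OF in2] pts by (auto simp: keys_add_nat keys_X)
    have V2: "pkeys (X (r1, s2) + X (b1, p2) + X (q1, b2)) \<subseteq> vertices P"
      using corner_in_V[OF in1] corner_in_V[OF in2] pts by (auto simp: keys_add_nat keys_X)
    obtain x y u where xy: "inner_interval P x y"
      "init ord (spoly ord (minor p q :: 'k mpoly) (minor p' q')) = X (q1, p2) + X (r1, b2) + X (b1, s2) \<or>
       init ord (spoly ord (minor p q :: 'k mpoly) (minor p' q')) = X (r1, s2) + X (b1, p2) + X (q1, b2)"
      "init ord (spoly ord (minor p q :: 'k mpoly) (minor p' q')) = u + init ord (minor x y :: 'k mpoly)"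
      "init ord (minor x y :: 'k mpoly) \<in> {X x + X y, X (fst x, snd y) + X (fst y, snd x)}"
      using two_mon[OF mo r S ne V1 V2] by blast
    have nc1': "\<not> inner_interval P (r1, p2) (b1, b2)" using nc1 pts by simp
    have nc2': "\<not> inner_interval P (b1, b2) (q1, s2)" using nc2 pts by simp
    show False
      using part2_contra[OF lt' nc1' nc2' fi[unfolded pts] gi[unfolded pts] xy(1) xy(2) xy(3) xy(4)] .
  qed
qed

theorem lemma2p1:
  fixes P :: "point set" and ord :: "monm \<Rightarrow> monm \<Rightarrow> bool"
  assumes P: "collection_of_cells P"
    and ord: "monomial_order (vertices P) ord"
  shows
   "(\<forall>(a::point) (b::point) (\<beta>::point).
      fst a < fst b \<and> fst b < fst \<beta> \<and> snd a < snd b \<and> snd b < snd \<beta> \<and>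
      inner_interval P a b \<and> inner_interval P b \<beta> \<and>
      reduces_to_zero (vertices P) ord (inner_minors P)
        (spoly ord (minor a b :: 'k::field mpoly) (minor b \<beta>)) \<and>
      \<not> inner_interval P (fst a, snd b) (fst b, snd \<beta>) \<and>
      \<not> inner_interval P (fst b, snd a) (fst \<beta>, snd b)
      \<longrightarrow> mon_gcd (init ord (minor a b :: 'k mpoly)) (init ord (minor b \<beta> :: 'k mpoly)) = 0)
  \<and>
   (\<forall>(p::point) (q::point) (p'::point) (q'::point) (b::point).
      inner_interval P p q \<and> inner_interval P p' q' \<and>
      interval p q \<inter> interval p' q' = {b} \<and>
      b = (fst p, snd q) \<and> b = (fst q', snd p') \<and>
      reduces_to_zero (vertices P) ord (inner_minors P)
        (spoly ord (minor p q :: 'k mpoly) (minor p' q')) \<and>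
      \<not> inner_interval P (fst p', snd p) b \<and>
      \<not> inner_interval P b (fst q, snd q')
      \<longrightarrow> mon_gcd (init ord (minor p q :: 'k mpoly)) (init ord (minor p' q' :: 'k mpoly)) = 0)"
proof (intro conjI allI impI)
  fix a b \<beta> :: point
  assume h: "fst a < fst b \<and> fst b < fst \<beta> \<and> snd a < snd b \<and> snd b < snd \<beta> \<and>
      inner_interval P a b \<and> inner_interval P b \<beta> \<and>
      reduces_to_zero (vertices P) ord (inner_minors P)
        (spoly ord (minor a b :: 'k::field mpoly) (minor b \<beta>)) \<and>
      \<not> inner_interval P (fst a, snd b) (fst b, snd \<beta>) \<and>
      \<not> inner_interval P (fst b, snd a) (fst \<beta>, snd b)"
  then show "mon_gcd (init ord (minor a b :: 'k mpoly)) (init ord (minor b \<beta> :: 'k mpoly)) = 0"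
    using part1[OF ord] by blast
next
  fix p q p' q' b :: point
  assume h: "inner_interval P p q \<and> inner_interval P p' q' \<and>
      interval p q \<inter> interval p' q' = {b} \<and>
      b = (fst p, snd q) \<and> b = (fst q', snd p') \<and>
      reduces_to_zero (vertices P) ord (inner_minors P)
        (spoly ord (minor p q :: 'k mpoly) (minor p' q')) \<and>
      \<not> inner_interval P (fst p', snd p) b \<and>
      \<not> inner_interval P b (fst q, snd q')"
  then show "mon_gcd (init ord (minor p q :: 'k mpoly)) (init ord (minor p' q' :: 'k mpoly)) = 0"
    using part2[OF ord] by blast
qed


end
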